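(* Every proper metric space (i.e. one whose closed balls are compact) has property (P) for nets.
   Context: For a nonempty subset $C$ of a metric space $X$, ${\rm cov}(C)$ is the intersection of all closed balls of $X$ containing $C$. Property (P) for nets: for any directed (pre)ordered index set $(I,\le)$ and any two bounded nets $\{x_s\}_{s\in I}$, $\{z_s\}_{s\in I}$ in $X$ with $z_s\in{\rm cov}(\{x_j:j\ge s\})$ for every $s$, there is $z\in\bigcap_s{\rm cov}(\{z_j:j\ge s\})$ such that $\limsup_s d(z,x_s)\le\limsup_t\limsup_s d(z_t,x_s)$. *)

theory Defs
  imports "HOL-Analysis.Analysis" "HOL-Library.Extended_Real"
begin

definition proper_metric :: "'a::metric_space itself \<Rightarrow> bool" where
  "proper_metric _ \<longleftrightarrow> (\<forall>(x::'a) r. compact (cball x r))"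

definition cov :: "'a::metric_space set \<Rightarrow> 'a set" where
  "cov C = \<Inter> {cball a r | a r. C \<subseteq> cball a r}"

definition directed_preorder :: "('i \<Rightarrow> 'i \<Rightarrow> bool) \<Rightarrow> bool" where
  "directed_preorder le \<longleftrightarrow> (\<forall>a. le a a) \<and> (\<forall>a b c. le a b \<longrightarrow> le b c \<longrightarrow> le a c)
     \<and> (\<forall>a b. \<exists>c. le a c \<and> le b c)"

definition net_limsup :: "('i \<Rightarrow> 'i \<Rightarrow> bool) \<Rightarrow> ('i \<Rightarrow> ereal) \<Rightarrow> ereal" where
  "net_limsup le f = (INF s. SUP j\<in>{j. le s j}. f j)"

end

theory Submission
  imports Defs
begin

lemma dir_ub:
  assumes "directed_preorder le" "finite I'"
  shows "\<exists>c. \<forall>i\<in>I'. le i c"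
  using assms(2)
proof (induction I' rule: finite_induct)
  case empty then show ?case by auto
next
  case (insert a F)
  then obtain c where c: "\<forall>i\<in>F. le i c" by auto
  obtain d where "le a d" "le c d" using assms(1) unfolding directed_preorder_def by blast
  moreover have "\<forall>i\<in>F. le i d"
  proof
    fix i assume "i \<in> F"
    then have "le i c" using c by blast
    with \<open>le c d\<close> show "le i d" using assms(1) unfolding directed_preorder_def by blast
  qed
  ultimately show ?case by blast
qed

theorem lemma5p2:
  fixes le :: "'i \<Rightarrow> 'i \<Rightarrow> bool" and x z :: "'i \<Rightarrow> 'a::metric_space"
  assumes "proper_metric TYPE('a)"
    and "directed_preorder le"
    and "bounded (range x)" and "bounded (range z)"
    and "\<And>s. z s \<in> cov {x j | j. le s j}"
  shows "\<exists>w. (\<forall>s. w \<in> cov {z j | j. le s j}) \<and>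
    net_limsup le (\<lambda>s. ereal (dist w (x s)))
      \<le> net_limsup le (\<lambda>t. net_limsup le (\<lambda>s. ereal (dist (z t) (x s))))"
proof -
  have refl: "\<And>a. le a a" and trans: "\<And>a b c. le a b \<Longrightarrow> le b c \<Longrightarrow> le a c"
    using assms(2) unfolding directed_preorder_def by blast+
  obtain a R where aR: "range z \<subseteq> cball a R" using assms(4) bounded_subset_cball by blast
  have cpt: "compact (cball a R)" using assms(1) unfolding proper_metric_def by blast
  have "cball a R \<inter> (\<Inter>i\<in>UNIV. closure {z j | j. le i j}) \<noteq> {}"
  proof (rule compact_imp_fip_image[OF cpt])
    fix I' :: "'i set" assume "finite I'" "I' \<subseteq> UNIV"
    then obtain c where c: "\<forall>i\<in>I'. le i c" using dir_ub[OF assms(2)] by blast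
    have "z c \<in> cball a R \<inter> (\<Inter>i\<in>I'. closure {z j | j. le i j})"
    proof (intro IntI INT_I)
      show "z c \<in> cball a R" using aR by blast
    next
      fix i assume "i \<in> I'"
      then have "z c \<in> {z j | j. le i j}" using c by blast
      then show "z c \<in> closure {z j | j. le i j}" by (meson closure_subset subsetD)
    qed
    then show "cball a R \<inter> (\<Inter>i\<in>I'. closure {z j | j. le i j}) \<noteq> {}" by (metis empty_iff)
  qed simp
  then obtain w where w: "\<And>i. w \<in> closure {z j | j. le i j}" by blast
  have clu: "\<exists>j. le i j \<and> dist w (z j) < e" if "e > 0" for i e
  proof -
    from w[of i] that obtain y where "y \<in> {z j | j. le i j}" "dist y w < e"
      unfolding closure_approachable by blast
    then show ?thesis by (auto simp: dist_commute)
  qed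
  have cov: "w \<in> cov {z j | j. le s j}" for s
    unfolding cov_def
  proof (rule InterI)
    fix B assume "B \<in> {cball b r | b r. {z j | j. le s j} \<subseteq> cball b r}"
    then obtain b r where B: "B = cball b r" "{z j | j. le s j} \<subseteq> cball b r" by blast
    then have "closure {z j | j. le s j} \<subseteq> cball b r" using closure_minimal closed_cball by blast
    then show "w \<in> B" using w B by blast
  qed
  define f where "f t = net_limsup le (\<lambda>s. ereal (dist (z t) (x s)))" for t
  have step1: "net_limsup le (\<lambda>s. ereal (dist w (x s))) \<le> ereal (dist w (z t)) + f t" for t
  proof (rule dense_ge)
    fix y assume y: "ereal (dist w (z t)) + f t < y"
    show "net_limsup le (\<lambda>s. ereal (dist w (x s))) \<le> y"
    proof (cases y)
      case PInf then show ?thesis by simp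
    next
      case MInf then show ?thesis using y by simp
    next
      case (real r)
      have "f t < ereal (r - dist w (z t))" using y real
        by (cases "f t") auto
      then obtain s where s: "(SUP j\<in>{j. le s j}. ereal (dist (z t) (x j))) < ereal (r - dist w (z t))"
        unfolding f_def net_limsup_def by (auto simp: INF_less_iff)
      have "(SUP j\<in>{j. le s j}. ereal (dist w (x j))) \<le> y"
      proof (rule SUP_least)
        fix j assume "j \<in> {j. le s j}"
        then have "ereal (dist (z t) (x j)) < ereal (r - dist w (z t))"
          using s by (meson SUP_upper order.strict_trans1)
        then show "ereal (dist w (x j)) \<le> y" using real dist_triangle[of w "x j" "z t"]
          by simp
      qed
      then show ?thesis unfolding net_limsup_def by (meson INF_lower2 UNIV_I)
    qed
  qed
  have "net_limsup le (\<lambda>s. ereal (dist w (x s))) \<le> net_limsup le f"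
  proof (rule dense_ge)
    fix y assume y: "net_limsup le f < y"
    show "net_limsup le (\<lambda>s. ereal (dist w (x s))) \<le> y"
    proof (cases "y = \<infinity>")
      case True then show ?thesis by simp
    next
      case False
      from y obtain s0 where s0: "(SUP t\<in>{t. le s0 t}. f t) < y"
        unfolding net_limsup_def by (auto simp: INF_less_iff)
      then obtain y' where y': "(SUP t\<in>{t. le s0 t}. f t) < y'" "y' < y" using dense by blast
      then obtain r' r where rr: "y' = ereal r'" "y = ereal r" using False
        by (cases y'; cases y) auto
      then have "r' < r" using y' by simp
      then obtain t where t: "le s0 t" "dist w (z t) < r - r'" using clu[of "r - r'" s0] by auto
      have "f t \<le> (SUP t\<in>{t. le s0 t}. f t)" using t by (auto intro: SUP_upper)
      then have ft: "f t < ereal r'" using y' rr by simp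
      have "ereal (dist w (z t)) + f t \<le> y"
        using ft t rr by (cases "f t") auto
      then show ?thesis using step1[of t] by simp
    qed
  qed
  then show ?thesis using cov unfolding f_def by blast
qed

end
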